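(* Let $d\ge1$, let $\Gamma\subset\mathbb{R}^d$ be open, and let $\{Q_j\}_{j\in J}$ be a finite or countably infinite family of open sets $Q_j\subset\mathbb{R}^d$ such that almost everywhere $\mathbb{1}_\Gamma\le\sum_{j\in J}\mathbb{1}_{Q_j}\le\kappa\mathbb{1}_\Gamma$ for some $\kappa\ge1$. Suppose $f\in C^\infty(\Gamma)$ satisfies $$\forall\alpha\in\mathbb{N}^d,\qquad\|\partial^\alpha f\|_{L^2(\Gamma)}\le DB^\alpha(|\alpha|!)^\mu$$ for some $D>0$, $B\in(0,\infty)^d$ and $\mu\in[0,1]$. Then for every $\varepsilon>0$ there is a subset $J_{\mathrm{gd}}=J_{\mathrm{gd}}(\varepsilon)\subset J$ such that $$\|f\|_{L^2(\Gamma)}^2\le\sum_{j\in J_{\mathrm{gd}}}\|f\|_{L^2(Q_j)}^2+\varepsilon D^2,$$ and for each $j\in J_{\mathrm{gd}}$, $$\forall\alpha\in\mathbb{N}^d,\qquad\|\partial^\alpha f\|_{L^2(Q_j)}\le\Big(\frac{2^d\kappa}{\varepsilon}\Big)^{1/2}(2B)^\alpha(|\alpha|!)^\mu\|f\|_{L^2(Q_j)}.$$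
   Context: For $B\in(0,\infty)^d$ and $\alpha\in\mathbb{N}^d$, $B^\alpha=\prod_iB_i^{\alpha_i}$ and $|\alpha|=\alpha_1+\dots+\alpha_d$; $\mathbb{N}=\{0,1,2,\dots\}$. Norms on $Q_j$ are understood on $Q_j\cap\Gamma$ (which coincides with $Q_j$ up to a null set by the covering hypothesis). *)

theory Defs
  imports "HOL-Analysis.Analysis"
begin

definition partial :: "'n::finite \<Rightarrow> (real^'n \<Rightarrow> complex) \<Rightarrow> real^'n \<Rightarrow> complex" where
  "partial i f x = frechet_derivative f (at x) (axis i 1)"

text \<open>Iterated partial derivative for a multi-index, peeling off one coordinate at a time
  (for smooth functions the order is irrelevant).\<close>
fun pd_aux :: "nat \<Rightarrow> ('n::finite \<Rightarrow> nat) \<Rightarrow> (real^'n \<Rightarrow> complex) \<Rightarrow> real^'n \<Rightarrow> complex" where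
  "pd_aux 0 \<alpha> f = f"
| "pd_aux (Suc k) \<alpha> f =
     (if \<alpha> = (\<lambda>_. 0) then f
      else (let i = (SOME i. 0 < \<alpha> i) in partial i (pd_aux k (\<alpha>(i := \<alpha> i - 1)) f)))"

definition mabs :: "('n::finite \<Rightarrow> nat) \<Rightarrow> nat" where
  "mabs \<alpha> = (\<Sum>i\<in>UNIV. \<alpha> i)"

definition pderiv_multi :: "('n::finite \<Rightarrow> nat) \<Rightarrow> (real^'n \<Rightarrow> complex) \<Rightarrow> real^'n \<Rightarrow> complex" where
  "pderiv_multi \<alpha> f = pd_aux (mabs \<alpha>) \<alpha> f"

definition smooth_on :: "(real^'n::finite) set \<Rightarrow> (real^'n \<Rightarrow> complex) \<Rightarrow> bool" where
  "smooth_on G f \<longleftrightarrow> (\<forall>\<alpha> x. x \<in> G \<longrightarrow> pderiv_multi \<alpha> f differentiable (at x))"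

definition mpow :: "real^'n::finite \<Rightarrow> ('n \<Rightarrow> nat) \<Rightarrow> real" where
  "mpow B \<alpha> = (\<Prod>i\<in>UNIV. (B $ i) ^ \<alpha> i)"

definition L2sq :: "(real^'n::finite) set \<Rightarrow> (real^'n \<Rightarrow> complex) \<Rightarrow> ennreal" where
  "L2sq S g = (\<integral>\<^sup>+ x. ennreal ((norm (g x))\<^sup>2) * indicator S x \<partial>lborel)"

end

theory Submission
  imports Defs
begin

lemma infsum_nat_ennreal: "infsum (u::nat \<Rightarrow> ennreal) UNIV = suminf u"
proof -
  have "u summable_on UNIV" by (rule nonneg_summable_on_complete) simp
  hence "(u has_sum infsum u UNIV) UNIV" by (rule has_sum_infsum)
  hence "u sums infsum u UNIV" by (rule has_sum_imp_sums)
  thus ?thesis by (simp add: sums_iff)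
qed

lemma nn_integral_infsum:
  fixes u :: "'j \<Rightarrow> 'a \<Rightarrow> ennreal"
  assumes "countable J" "\<And>j. j\<in>J \<Longrightarrow> u j \<in> borel_measurable M"
  shows "(\<integral>\<^sup>+x. (\<Sum>\<^sub>\<infinity>j\<in>J. u j x) \<partial>M) = (\<Sum>\<^sub>\<infinity>j\<in>J. \<integral>\<^sup>+x. u j x \<partial>M)"
proof (cases "finite J")
  case True
  thus ?thesis using assms(2) by (simp add: nn_integral_sum)
next
  case False
  define g where "g = from_nat_into J"
  have b: "bij_betw g UNIV J" unfolding g_def by (rule bij_betw_from_nat_into[OF assms(1) False])
  have gJ: "g n \<in> J" for n using b by (auto simp: bij_betw_def)
  have "(\<Sum>\<^sub>\<infinity>j\<in>J. u j x) = (\<Sum>n. u (g n) x)" for x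
  proof -
    have "(\<Sum>\<^sub>\<infinity>j\<in>J. u j x) = (\<Sum>\<^sub>\<infinity>n\<in>UNIV. u (g n) x)"
      by (rule infsum_reindex_bij_betw[OF b, symmetric])
    also have "\<dots> = (\<Sum>n. u (g n) x)" by (rule infsum_nat_ennreal)
    finally show ?thesis .
  qed
  hence "(\<integral>\<^sup>+x. (\<Sum>\<^sub>\<infinity>j\<in>J. u j x) \<partial>M) = (\<integral>\<^sup>+x. (\<Sum>n. u (g n) x) \<partial>M)" by simp
  also have "\<dots> = (\<Sum>n. \<integral>\<^sup>+x. u (g n) x \<partial>M)"
    by (rule nn_integral_suminf) (use assms(2) gJ in auto)
  also have "\<dots> = (\<Sum>\<^sub>\<infinity>n\<in>UNIV. \<integral>\<^sup>+x. u (g n) x \<partial>M)"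
    by (rule infsum_nat_ennreal[symmetric])
  also have "\<dots> = (\<Sum>\<^sub>\<infinity>j\<in>J. \<integral>\<^sup>+x. u j x \<partial>M)"
    by (rule infsum_reindex_bij_betw[OF b])
  finally show ?thesis .
qed

lemma meas_L2:
  fixes g :: "real^'n::finite \<Rightarrow> complex"
  assumes "open G" "\<forall>x\<in>G. g differentiable (at x)"
  shows "(\<lambda>x. ennreal ((norm (g x))\<^sup>2) * indicator G x) \<in> borel_measurable lborel"
proof -
  have c: "continuous_on G g"
    using assms(2) by (meson continuous_at_imp_continuous_on differentiable_imp_continuous_within)
  have m: "(\<lambda>x. indicator G x *\<^sub>R g x) \<in> borel_measurable borel"
    by (rule borel_measurable_continuous_on_indicator) (use assms(1) c in auto)
  have eq: "(\<lambda>x. ennreal ((norm (g x))\<^sup>2) * indicator G x) = (\<lambda>x. ennreal ((norm (indicator G x *\<^sub>R g x))\<^sup>2))"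
    by (auto simp: indicator_def)
  have "(\<lambda>x. ennreal ((norm (indicator G x *\<^sub>R g x))\<^sup>2)) \<in> borel_measurable borel"
    using m by measurable
  thus ?thesis unfolding eq by simp
qed

lemma mpow2: "mpow (2 *\<^sub>R B) \<alpha> = 2 ^ mabs \<alpha> * mpow B \<alpha>"
  unfolding mpow_def mabs_def by (simp add: power_mult_distrib prod.distrib power_sum)

lemma mpow_pos: "\<forall>i. B $ i > 0 \<Longrightarrow> mpow B \<alpha> > 0"
  unfolding mpow_def by (simp add: prod_pos)

lemma sum_quarter:
  fixes A :: "('n::finite \<Rightarrow> nat) set"
  assumes "finite A"
  shows "(\<Sum>\<alpha>\<in>A. (1/4::real) ^ mabs \<alpha>) \<le> 2 ^ CARD('n)"
proof -
  define N where "N = Max ((\<lambda>(\<alpha>,i). \<alpha> i) ` (A \<times> UNIV))"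
  have AP: "A \<subseteq> PiE (UNIV::'n set) (\<lambda>_. {..N})"
    unfolding N_def using assms by (auto simp: PiE_def intro!: Max_ge)
  have "(\<Sum>\<alpha>\<in>A. (1/4::real) ^ mabs \<alpha>) \<le> (\<Sum>\<alpha>\<in>PiE (UNIV::'n set) (\<lambda>_. {..N}). (1/4::real) ^ mabs \<alpha>)"
    by (rule sum_mono2[OF _ AP]) (auto intro: finite_PiE)
  also have "\<dots> = (\<Sum>\<alpha>\<in>PiE (UNIV::'n set) (\<lambda>_. {..N}). \<Prod>i\<in>UNIV. (1/4::real) ^ \<alpha> i)"
    unfolding mabs_def by (simp add: power_sum)
  also have "\<dots> = (\<Prod>i\<in>(UNIV::'n set). \<Sum>k\<in>{..N}. (1/4::real) ^ k)"
    by (rule prod_sum_PiE[symmetric]) auto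
  also have "\<dots> \<le> (\<Prod>i\<in>(UNIV::'n set). 2)"
  proof (rule prod_mono, safe)
    fix i
    show "0 \<le> (\<Sum>k\<in>{..N}. (1/4::real) ^ k)" by (simp add: sum_nonneg)
    have "(\<Sum>k\<in>{..N}. (1/4::real) ^ k) = (1 - (1/4)^Suc N) / (1 - 1/4)"
      using sum_gp_strict[of "1/4::real" "Suc N"] by (simp add: lessThan_Suc_atMost)
    also have "\<dots> \<le> 2" by (simp add: field_simps)
    finally show "(\<Sum>k\<in>{..N}. (1/4::real) ^ k) \<le> 2" .
  qed
  also have "\<dots> = 2 ^ CARD('n)" by simp
  finally show ?thesis .
qed


lemma weight_real:
  fixes m p \<kappa> \<epsilon> D :: real and d k :: nat
  assumes "m > 0" "p > 0" "\<kappa> > 0" "\<epsilon> > 0"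
  shows "1 / ((2 ^ d * \<kappa> / \<epsilon>) * (2 ^ k * m * p)\<^sup>2) * (\<kappa> * (D * m * p)\<^sup>2) = \<epsilon> * D\<^sup>2 / 2 ^ d * (1/4) ^ k"
proof -
  have four: "(1/4::real) ^ k = 1 / (2 ^ k * 2 ^ k)"
    by (simp add: power_one_over power_mult_distrib[symmetric])
  show ?thesis unfolding four using assms by (simp add: field_simps power2_eq_square)
qed

lemma infsum_cmult_ennreal: "(\<Sum>\<^sub>\<infinity>j\<in>J. c * g j) = (c::ennreal) * (\<Sum>\<^sub>\<infinity>j\<in>J. g j)"
proof -
  have "(\<Sum>\<^sub>\<infinity>j\<in>J. c * g j) = (SUP F\<in>{F. finite F \<and> F \<subseteq> J}. sum (\<lambda>j. c * g j) F)"
    by (rule nonneg_infsum_complete) simp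
  also have "\<dots> = (SUP F\<in>{F. finite F \<and> F \<subseteq> J}. c * sum g F)"
    by (simp add: sum_distrib_left)
  also have "\<dots> = c * (SUP F\<in>{F. finite F \<and> F \<subseteq> J}. sum g F)"
    by (rule SUP_mult_left_ennreal[symmetric])
  also have "\<dots> = c * (\<Sum>\<^sub>\<infinity>j\<in>J. g j)"
    by (subst nonneg_infsum_complete) simp_all
  finally show ?thesis .
qed

lemma L2sq_inter:
  fixes g :: "real^'n::finite \<Rightarrow> complex"
  shows "L2sq (Q \<inter> \<Gamma>) g = (\<integral>\<^sup>+x. (ennreal ((norm (g x))\<^sup>2) * indicator \<Gamma> x) * indicator Q x \<partial>lborel)"
  unfolding L2sq_def by (intro nn_integral_cong) (simp add: indicator_def)

lemma cover_bounds:
  fixes g :: "real^'n::finite \<Rightarrow> complex" and Q :: "'j \<Rightarrow> (real^'n) set"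
  assumes J: "countable J" and Qo: "\<forall>j\<in>J. open (Q j)"
    and AE: "AE x in lborel. indicator \<Gamma> x \<le> (\<Sum>\<^sub>\<infinity>j\<in>J. (indicator (Q j) x :: ennreal))
                        \<and> (\<Sum>\<^sub>\<infinity>j\<in>J. (indicator (Q j) x :: ennreal)) \<le> ennreal \<kappa> * indicator \<Gamma> x"
    and meas: "(\<lambda>x. ennreal ((norm (g x))\<^sup>2) * indicator \<Gamma> x) \<in> borel_measurable lborel"
  shows "L2sq \<Gamma> g \<le> (\<Sum>\<^sub>\<infinity>j\<in>J. L2sq (Q j \<inter> \<Gamma>) g)"
    and "(\<Sum>\<^sub>\<infinity>j\<in>J. L2sq (Q j \<inter> \<Gamma>) g) \<le> ennreal \<kappa> * L2sq \<Gamma> g"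
proof -
  define h where "h x = ennreal ((norm (g x))\<^sup>2) * indicator \<Gamma> x" for x
  define S where "S x = (\<Sum>\<^sub>\<infinity>j\<in>J. (indicator (Q j) x :: ennreal))" for x
  have hm: "h \<in> borel_measurable lborel" using meas unfolding h_def .
  have Lh: "L2sq \<Gamma> g = (\<integral>\<^sup>+x. h x \<partial>lborel)" by (simp add: L2sq_def h_def)
  have eq: "(\<Sum>\<^sub>\<infinity>j\<in>J. L2sq (Q j \<inter> \<Gamma>) g) = (\<integral>\<^sup>+x. h x * S x \<partial>lborel)"
  proof -
    have "(\<Sum>\<^sub>\<infinity>j\<in>J. L2sq (Q j \<inter> \<Gamma>) g) = (\<Sum>\<^sub>\<infinity>j\<in>J. \<integral>\<^sup>+x. h x * indicator (Q j) x \<partial>lborel)"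
      unfolding h_def by (intro infsum_cong) (rule L2sq_inter)
    also have "\<dots> = (\<integral>\<^sup>+x. (\<Sum>\<^sub>\<infinity>j\<in>J. h x * indicator (Q j) x) \<partial>lborel)"
    proof (rule nn_integral_infsum[symmetric, OF J])
      fix j assume "j \<in> J"
      hence "Q j \<in> sets lborel" using Qo by simp
      thus "(\<lambda>x. h x * indicator (Q j) x) \<in> borel_measurable lborel"
        using hm by (intro borel_measurable_times_ennreal borel_measurable_indicator)
    qed
    also have "\<dots> = (\<integral>\<^sup>+x. h x * S x \<partial>lborel)"
    proof -
      have "(\<Sum>\<^sub>\<infinity>j\<in>J. h x * indicator (Q j) x) = h x * S x" for x
        unfolding S_def by (rule infsum_cmult_ennreal)
      thus ?thesis by simp
    qed
    finally show ?thesis .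
  qed
  have "(\<integral>\<^sup>+x. h x \<partial>lborel) \<le> (\<integral>\<^sup>+x. h x * S x \<partial>lborel)"
  proof (rule nn_integral_mono_AE)
    show "AE x in lborel. h x \<le> h x * S x"
      using AE
    proof eventually_elim
      case (elim x)
      show ?case
      proof (cases "x \<in> \<Gamma>")
        case True
        hence "1 \<le> S x" using elim by (simp add: S_def)
        hence "h x * 1 \<le> h x * S x" by (rule mult_left_mono) simp
        thus ?thesis by simp
      qed (simp add: h_def)
    qed
  qed
  thus "L2sq \<Gamma> g \<le> (\<Sum>\<^sub>\<infinity>j\<in>J. L2sq (Q j \<inter> \<Gamma>) g)" using Lh eq by simp
  have "(\<integral>\<^sup>+x. h x * S x \<partial>lborel) \<le> (\<integral>\<^sup>+x. ennreal \<kappa> * h x \<partial>lborel)"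
  proof (rule nn_integral_mono_AE)
    show "AE x in lborel. h x * S x \<le> ennreal \<kappa> * h x"
      using AE
    proof eventually_elim
      case (elim x)
      show ?case
      proof (cases "x \<in> \<Gamma>")
        case True
        hence "S x \<le> ennreal \<kappa>" using elim by (simp add: S_def)
        hence "h x * S x \<le> h x * ennreal \<kappa>" by (rule mult_left_mono) simp
        thus ?thesis by (simp add: mult_ac)
      qed (simp add: h_def)
    qed
  qed
  also have "\<dots> = ennreal \<kappa> * L2sq \<Gamma> g" using hm Lh by (simp add: nn_integral_cmult)
  finally show "(\<Sum>\<^sub>\<infinity>j\<in>J. L2sq (Q j \<inter> \<Gamma>) g) \<le> ennreal \<kappa> * L2sq \<Gamma> g" using eq by simp
qed

theorem lemma3p4:
  fixes \<Gamma> :: "(real^'n) set" and Q :: "'j \<Rightarrow> (real^'n) set" and J :: "'j set"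
    and f :: "real^'n \<Rightarrow> complex" and \<kappa> D \<mu> :: real and B :: "real^'n"
  assumes "open \<Gamma>"
    and "countable J"
    and "\<forall>j\<in>J. open (Q j)"
    and "\<kappa> \<ge> 1"
    and "AE x in lborel. indicator \<Gamma> x \<le> (\<Sum>\<^sub>\<infinity>j\<in>J. (indicator (Q j) x :: ennreal))
                        \<and> (\<Sum>\<^sub>\<infinity>j\<in>J. (indicator (Q j) x :: ennreal)) \<le> ennreal \<kappa> * indicator \<Gamma> x"
    and "smooth_on \<Gamma> f"
    and "D > 0" and "\<forall>i. B $ i > 0" and "0 \<le> \<mu>" and "\<mu> \<le> 1"
    and "\<forall>\<alpha>. L2sq \<Gamma> (pderiv_multi \<alpha> f)
               \<le> ennreal ((D * mpow B \<alpha> * fact (mabs \<alpha>) powr \<mu>)\<^sup>2)"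
  shows "\<forall>\<epsilon>>0. \<exists>Jgd \<subseteq> J.
           L2sq \<Gamma> f \<le> (\<Sum>\<^sub>\<infinity>j\<in>Jgd. L2sq (Q j \<inter> \<Gamma>) f) + ennreal (\<epsilon> * D\<^sup>2)
         \<and> (\<forall>j\<in>Jgd. \<forall>\<alpha>. L2sq (Q j \<inter> \<Gamma>) (pderiv_multi \<alpha> f)
               \<le> ennreal ((2 ^ CARD('n) * \<kappa> / \<epsilon>) * (mpow (2 *\<^sub>R B) \<alpha> * fact (mabs \<alpha>) powr \<mu>)\<^sup>2)
                 * L2sq (Q j \<inter> \<Gamma>) f)"
proof (intro allI impI)
  fix \<epsilon> :: real assume ep: "\<epsilon> > 0"
  note J = assms(2) and Qo = assms(3) and AE = assms(5)
  have kp: "\<kappa> > 0" using assms(4) by simp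
  have Bp: "\<forall>i. B $ i > 0" using assms(8) .
  define d where "d = CARD('n)"
  define Lq where "Lq j g = L2sq (Q j \<inter> \<Gamma>) g" for j g
  define c where "c \<alpha> = (2 ^ d * \<kappa> / \<epsilon>) * (mpow (2 *\<^sub>R B) \<alpha> * fact (mabs \<alpha>) powr \<mu>)\<^sup>2" for \<alpha>
  define Jgd where "Jgd = {j\<in>J. \<forall>\<alpha>. Lq j (pderiv_multi \<alpha> f) \<le> ennreal (c \<alpha>) * Lq j f}"
  have meas: "(\<lambda>x. ennreal ((norm (pderiv_multi \<alpha> f x))\<^sup>2) * indicator \<Gamma> x) \<in> borel_measurable lborel" for \<alpha>
    using assms(1,6) by (intro meas_L2) (auto simp: smooth_on_def)
  have cpos: "c \<alpha> > 0" for \<alpha>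
  proof -
    have "mpow (2 *\<^sub>R B) \<alpha> > 0" using Bp by (intro mpow_pos) simp
    moreover have "fact (mabs \<alpha>) powr \<mu> > (0::real)" by simp
    ultimately show ?thesis unfolding c_def using kp ep by (simp add: zero_less_mult_iff)
  qed
  have bad: "\<exists>\<alpha>. Lq j f \<le> ennreal (1 / c \<alpha>) * Lq j (pderiv_multi \<alpha> f)" if "j \<in> J - Jgd" for j
  proof -
    from that obtain \<alpha> where lt: "ennreal (c \<alpha>) * Lq j f < Lq j (pderiv_multi \<alpha> f)"
      unfolding Jgd_def by (auto simp: not_le)
    have one: "ennreal (1 / c \<alpha>) * ennreal (c \<alpha>) = 1"
      using cpos[of \<alpha>] by (simp add: ennreal_mult[symmetric])
    have "Lq j f = ennreal (1 / c \<alpha>) * (ennreal (c \<alpha>) * Lq j f)"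
      by (simp add: mult.assoc[symmetric] one)
    also have "\<dots> \<le> ennreal (1 / c \<alpha>) * Lq j (pderiv_multi \<alpha> f)"
      using lt by (intro mult_left_mono) auto
    finally show ?thesis by (rule exI[of _ \<alpha>])
  qed
  hence "\<forall>j\<in>J - Jgd. \<exists>\<alpha>. Lq j f \<le> ennreal (1 / c \<alpha>) * Lq j (pderiv_multi \<alpha> f)" by blast
  from bchoice[OF this] obtain a where a0: "\<forall>j\<in>J - Jgd. Lq j f \<le> ennreal (1 / c (a j)) * Lq j (pderiv_multi (a j) f)"
    by blast
  have a: "Lq j f \<le> ennreal (1 / c (a j)) * Lq j (pderiv_multi (a j) f)" if "j \<in> J - Jgd" for j
    using a0 that by blast
  have weight: "ennreal (1 / c \<alpha>) * (ennreal \<kappa> * ennreal ((D * mpow B \<alpha> * fact (mabs \<alpha>) powr \<mu>)\<^sup>2))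
      = ennreal (\<epsilon> * D\<^sup>2 / 2 ^ d * (1/4) ^ mabs \<alpha>)" for \<alpha>
  proof -
    have m: "mpow B \<alpha> > 0" using Bp by (rule mpow_pos)
    have p: "fact (mabs \<alpha>) powr \<mu> > (0::real)" by simp
    have four: "(2::real) ^ mabs \<alpha> * 2 ^ mabs \<alpha> = 4 ^ mabs \<alpha>"
      by (simp add: power_mult_distrib[symmetric])
    have "1 / c \<alpha> * (\<kappa> * (D * mpow B \<alpha> * fact (mabs \<alpha>) powr \<mu>)\<^sup>2) = \<epsilon> * D\<^sup>2 / 2 ^ d * (1/4) ^ mabs \<alpha>"
      unfolding c_def mpow2 using weight_real[OF m p kp ep] .
    moreover have "ennreal (1 / c \<alpha>) * (ennreal \<kappa> * ennreal ((D * mpow B \<alpha> * fact (mabs \<alpha>) powr \<mu>)\<^sup>2))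
        = ennreal (1 / c \<alpha> * (\<kappa> * (D * mpow B \<alpha> * fact (mabs \<alpha>) powr \<mu>)\<^sup>2))"
    proof -
      let ?y = "(D * mpow B \<alpha> * fact (mabs \<alpha>) powr \<mu>)\<^sup>2"
      have e1: "ennreal (1 / c \<alpha> * (\<kappa> * ?y)) = ennreal (1 / c \<alpha>) * ennreal (\<kappa> * ?y)"
        using cpos[of \<alpha>] kp by (intro ennreal_mult) auto
      have e2: "ennreal (\<kappa> * ?y) = ennreal \<kappa> * ennreal ?y"
        using kp by (intro ennreal_mult) auto
      show ?thesis by (simp only: e1 e2)
    qed
    ultimately show ?thesis by simp
  qed
  have finle: "sum h F \<le> infsum h J" if "finite F" "F \<subseteq> J" for h :: "'j \<Rightarrow> ennreal" and F
    using that by (subst nonneg_infsum_complete) (auto intro!: SUP_upper)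
  have badsum: "(\<Sum>\<^sub>\<infinity>j\<in>J - Jgd. Lq j f) \<le> ennreal (\<epsilon> * D\<^sup>2)"
  proof (rule infsum_le_finite_sums)
    show "(\<lambda>j. Lq j f) summable_on J - Jgd" by (rule nonneg_summable_on_complete) simp
    fix F assume F: "finite F" "F \<subseteq> J - Jgd"
    define A where "A = a ` F"
    have fA: "finite A" using F by (simp add: A_def)
    have "(\<Sum>j\<in>F. Lq j f) \<le> (\<Sum>j\<in>F. \<Sum>\<alpha>\<in>A. ennreal (1 / c \<alpha>) * Lq j (pderiv_multi \<alpha> f))"
    proof (rule sum_mono)
      fix j assume j: "j \<in> F"
      have "Lq j f \<le> ennreal (1 / c (a j)) * Lq j (pderiv_multi (a j) f)" using a j F by auto
      also have "\<dots> \<le> (\<Sum>\<alpha>\<in>A. ennreal (1 / c \<alpha>) * Lq j (pderiv_multi \<alpha> f))"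
        by (rule member_le_sum) (use j fA in \<open>auto simp: A_def\<close>)
      finally show "Lq j f \<le> (\<Sum>\<alpha>\<in>A. ennreal (1 / c \<alpha>) * Lq j (pderiv_multi \<alpha> f))" .
    qed
    also have "\<dots> = (\<Sum>\<alpha>\<in>A. ennreal (1 / c \<alpha>) * (\<Sum>j\<in>F. Lq j (pderiv_multi \<alpha> f)))"
      by (subst sum.swap) (simp add: sum_distrib_left)
    also have "\<dots> \<le> (\<Sum>\<alpha>\<in>A. ennreal (1 / c \<alpha>) * (ennreal \<kappa> * ennreal ((D * mpow B \<alpha> * fact (mabs \<alpha>) powr \<mu>)\<^sup>2)))"
    proof (rule sum_mono, rule mult_left_mono)
      fix \<alpha>
      have "(\<Sum>j\<in>F. Lq j (pderiv_multi \<alpha> f)) \<le> (\<Sum>\<^sub>\<infinity>j\<in>J. Lq j (pderiv_multi \<alpha> f))"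
        using F by (intro finle) auto
      also have "\<dots> \<le> ennreal \<kappa> * L2sq \<Gamma> (pderiv_multi \<alpha> f)"
        unfolding Lq_def by (rule cover_bounds(2)[OF J Qo AE meas])
      also have "\<dots> \<le> ennreal \<kappa> * ennreal ((D * mpow B \<alpha> * fact (mabs \<alpha>) powr \<mu>)\<^sup>2)"
        using assms(11) by (intro mult_left_mono) auto
      finally show "(\<Sum>j\<in>F. Lq j (pderiv_multi \<alpha> f)) \<le> ennreal \<kappa> * ennreal ((D * mpow B \<alpha> * fact (mabs \<alpha>) powr \<mu>)\<^sup>2)" .
    qed simp
    also have "\<dots> = (\<Sum>\<alpha>\<in>A. ennreal (\<epsilon> * D\<^sup>2 / 2 ^ d * (1/4) ^ mabs \<alpha>))"
      by (simp add: weight)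
    also have "\<dots> = ennreal (\<Sum>\<alpha>\<in>A. \<epsilon> * D\<^sup>2 / 2 ^ d * (1/4) ^ mabs \<alpha>)"
      using ep by (intro sum_ennreal) simp
    also have "\<dots> \<le> ennreal (\<epsilon> * D\<^sup>2)"
    proof (rule ennreal_leI)
      have "(\<Sum>\<alpha>\<in>A. \<epsilon> * D\<^sup>2 / 2 ^ d * (1/4) ^ mabs \<alpha>) = \<epsilon> * D\<^sup>2 / 2 ^ d * (\<Sum>\<alpha>\<in>A. (1/4::real) ^ mabs \<alpha>)"
        by (simp add: sum_distrib_left)
      also have "\<dots> \<le> \<epsilon> * D\<^sup>2 / 2 ^ d * 2 ^ d"
        using sum_quarter[OF fA] ep unfolding d_def by (intro mult_left_mono) auto
      also have "\<dots> = \<epsilon> * D\<^sup>2" by simp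
      finally show "(\<Sum>\<alpha>\<in>A. \<epsilon> * D\<^sup>2 / 2 ^ d * (1/4) ^ mabs \<alpha>) \<le> \<epsilon> * D\<^sup>2" .
    qed
    finally show "(\<Sum>j\<in>F. Lq j f) \<le> ennreal (\<epsilon> * D\<^sup>2)" .
  qed
  have "L2sq \<Gamma> f \<le> (\<Sum>\<^sub>\<infinity>j\<in>J. Lq j f)"
    unfolding Lq_def using cover_bounds(1)[OF J Qo AE meas[of "\<lambda>_. 0"]]
    by (simp add: pderiv_multi_def mabs_def)
  also have "\<dots> = (\<Sum>\<^sub>\<infinity>j\<in>Jgd. Lq j f) + (\<Sum>\<^sub>\<infinity>j\<in>J - Jgd. Lq j f)"
  proof -
    have "J = Jgd \<union> (J - Jgd)" by (auto simp: Jgd_def)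
    hence "(\<Sum>\<^sub>\<infinity>j\<in>J. Lq j f) = (\<Sum>\<^sub>\<infinity>j\<in>Jgd \<union> (J - Jgd). Lq j f)" by simp
    also have "\<dots> = (\<Sum>\<^sub>\<infinity>j\<in>Jgd. Lq j f) + (\<Sum>\<^sub>\<infinity>j\<in>J - Jgd. Lq j f)"
      by (rule infsum_Un_disjoint) (auto intro: nonneg_summable_on_complete)
    finally show ?thesis .
  qed
  also have "\<dots> \<le> (\<Sum>\<^sub>\<infinity>j\<in>Jgd. Lq j f) + ennreal (\<epsilon> * D\<^sup>2)"
    using badsum by (rule add_left_mono)
  finally have g1: "L2sq \<Gamma> f \<le> (\<Sum>\<^sub>\<infinity>j\<in>Jgd. L2sq (Q j \<inter> \<Gamma>) f) + ennreal (\<epsilon> * D\<^sup>2)"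
    unfolding Lq_def .
  have g2: "\<forall>j\<in>Jgd. \<forall>\<alpha>. L2sq (Q j \<inter> \<Gamma>) (pderiv_multi \<alpha> f)
               \<le> ennreal ((2 ^ CARD('n) * \<kappa> / \<epsilon>) * (mpow (2 *\<^sub>R B) \<alpha> * fact (mabs \<alpha>) powr \<mu>)\<^sup>2)
                 * L2sq (Q j \<inter> \<Gamma>) f"
    unfolding Jgd_def Lq_def c_def d_def by simp
  have "Jgd \<subseteq> J" by (auto simp: Jgd_def)
  with g1 g2 show "\<exists>Jgd \<subseteq> J.
           L2sq \<Gamma> f \<le> (\<Sum>\<^sub>\<infinity>j\<in>Jgd. L2sq (Q j \<inter> \<Gamma>) f) + ennreal (\<epsilon> * D\<^sup>2)
         \<and> (\<forall>j\<in>Jgd. \<forall>\<alpha>. L2sq (Q j \<inter> \<Gamma>) (pderiv_multi \<alpha> f)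
               \<le> ennreal ((2 ^ CARD('n) * \<kappa> / \<epsilon>) * (mpow (2 *\<^sub>R B) \<alpha> * fact (mabs \<alpha>) powr \<mu>)\<^sup>2)
                 * L2sq (Q j \<inter> \<Gamma>) f)" by (intro exI[of _ Jgd] conjI) assumption+
qed

end
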